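(* Let $X$ be a real Banach space. (a) $f \in S(X^* )$ is a w*-semidenting point of $B(X^* )$ if and only if $d_0^*(f,t) > 0$ for every $0<t<2$. (b) $X$ has the Mazur Intersection Property if and only if $d_0^*(f,t) > 0$ for every $f \in S(X^* )$ and every $t \in (0,2)$. (c) $X$ has the Uniform Mazur Intersection Property if and only if $d_0^*(t) > 0$ for every $t \in (0,2)$.
   Context: $B(\cdot)$, $S(\cdot)$ denote closed unit ball and unit sphere; $B(f,\varepsilon)$ the open ball. For $x \in S(X)$ and real $\alpha$, $S(B(X^* ), x, \alpha) := \{g \in B(X^* ) : g(x) > \alpha\}$. $f \in S(X^* )$ is a w*-semidenting point of $B(X^* )$ if for every $\varepsilon>0$ there exist $0<\alpha<1$ and $x \in S(X)$ with $S(B(X^* ),x,\alpha) \subseteq B(f,\varepsilon)$. $X$ has the Mazur Intersection Property (MIP) if every closed bounded convex subset of $X$ is the intersection of the closed balls containing it. $X$ has the Uniform MIP (UMIP) if for every $\varepsilon>0$ there is $K>0$ such that for every closed bounded convex $C \subseteq X$ and $p \in X$ with $\operatorname{diam}(C) < 1/\varepsilon$ and $d(p,C) \geq \varepsilon$, there is a closed ball $B[x_0,r_0] \supseteq C$ with $d(p, B[x_0,r_0]) \geq \varepsilon/2$ and $r_0 \leq K$. For $0<t<2$, $f \in S(X^* )$, $x \in S(X)$: $s^*(f,x,t) := \inf\{\|f+h\| - 1 : h \in X^*,\ \|h\| \geq t/4,\ h(x)=0\}$; $d^*(g,t) := \sup_{x\in S(X)} s^*(g,x,t)$; $d_0^*(f,t)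 := \sup\{s^*(g,x,t) : x \in S(X),\ g \in S(X^* ),\ \|f-g\| < t\}$; $d_0^*(t) := \inf_{f \in S(X^* )} d_0^*(f,t)$. *)

theory Defs
  imports "HOL-Analysis.Analysis"
begin

text \<open>The quantities s*, d*, d0* take values in the extended reals, so that
  inf of the empty set is +\<infinity> and sup of the empty set is -\<infinity>.\<close>

definition dual_slice :: "'a::real_normed_vector \<Rightarrow> real \<Rightarrow> ('a \<Rightarrow>\<^sub>L real) set" where
  "dual_slice x \<alpha> = {g. norm g \<le> 1 \<and> blinfun_apply g x > \<alpha>}"

definition wstar_semidenting :: "('a::real_normed_vector \<Rightarrow>\<^sub>L real) \<Rightarrow> bool" where
  "wstar_semidenting f \<longleftrightarrow> norm f = 1 \<and>
     (\<forall>\<epsilon>>0. \<exists>\<alpha> x. 0 < \<alpha> \<and> \<alpha> < 1 \<and> norm x = 1 \<and> dual_slice x \<alpha> \<subseteq> ball f \<epsilon>)"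

definition mazur_intersection_property :: "'a::real_normed_vector itself \<Rightarrow> bool" where
  "mazur_intersection_property _ \<longleftrightarrow>
     (\<forall>C::'a set. closed C \<and> bounded C \<and> convex C \<and> C \<noteq> {} \<longrightarrow>
        C = \<Inter> {cball x r | x r. C \<subseteq> cball x r})"

definition uniform_mazur_intersection_property :: "'a::real_normed_vector itself \<Rightarrow> bool" where
  "uniform_mazur_intersection_property _ \<longleftrightarrow>
     (\<forall>\<epsilon>>0. \<exists>K>0. \<forall>(C::'a set) p.
        closed C \<and> bounded C \<and> convex C \<and> C \<noteq> {} \<and> diameter C < 1 / \<epsilon> \<and> infdist p C \<ge> \<epsilon> \<longrightarrow>
        (\<exists>x0 r0. C \<subseteq> cball x0 r0 \<and> infdist p (cball x0 r0) \<ge> \<epsilon> / 2 \<and> r0 \<le> K))"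

definition s_star :: "('a::real_normed_vector \<Rightarrow>\<^sub>L real) \<Rightarrow> 'a \<Rightarrow> real \<Rightarrow> ereal" where
  "s_star f x t = Inf {ereal (norm (f + h) - 1) | h. norm h \<ge> t / 4 \<and> blinfun_apply h x = 0}"

definition d_star :: "('a::real_normed_vector \<Rightarrow>\<^sub>L real) \<Rightarrow> real \<Rightarrow> ereal" where
  "d_star g t = Sup {s_star g x t | x. norm x = 1}"

definition d0_star :: "('a::real_normed_vector \<Rightarrow>\<^sub>L real) \<Rightarrow> real \<Rightarrow> ereal" where
  "d0_star f t = Sup {s_star g x t | g x. norm x = 1 \<and> norm g = 1 \<and> norm (f - g) < t}"

definition d0_star_mod :: "'a::real_normed_vector itself \<Rightarrow> real \<Rightarrow> ereal" where
  "d0_star_mod _ t = Inf {d0_star (f :: 'a \<Rightarrow>\<^sub>L real) t | f. norm f = 1}"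

end

theory Submission
  imports Defs
begin


definition sublin :: "('a::real_vector \<Rightarrow> real) \<Rightarrow> bool" where
  "sublin q \<longleftrightarrow> (\<forall>x y. q (x + y) \<le> q x + q y) \<and> (\<forall>c x. c \<ge> 0 \<longrightarrow> q (c *\<^sub>R x) = c * q x)"

lemma sublin_0: "sublin q \<Longrightarrow> q 0 = 0"
  unfolding sublin_def by (metis mult_zero_left order_refl scaleR_zero_left)

lemma sublin_add: "sublin q \<Longrightarrow> q (x + y) \<le> q x + q y"
  unfolding sublin_def by blast

lemma sublin_scale: "sublin q \<Longrightarrow> c \<ge> 0 \<Longrightarrow> q (c *\<^sub>R x) = c * q x"
  unfolding sublin_def by blast

lemma sublin_neg: "sublin q \<Longrightarrow> - q (- x) \<le> q x"
  using sublin_add[of q x "-x"] sublin_0[of q] by simp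

definition shiftq :: "('a::real_vector \<Rightarrow> real) \<Rightarrow> 'a \<Rightarrow> 'a \<Rightarrow> real" where
  "shiftq q a x = Inf ((\<lambda>t. q (x + t *\<^sub>R a) - t * q a) ` {0..})"

lemma shiftq_lb:
  assumes "sublin q" "t \<ge> 0"
  shows "- q (- x) \<le> q (x + t *\<^sub>R a) - t * q a"
proof -
  have "q (t *\<^sub>R a) \<le> q (x + t *\<^sub>R a) + q (- x)"
    using sublin_add[OF assms(1), of "x + t *\<^sub>R a" "-x"] by simp
  thus ?thesis using sublin_scale[OF assms] by simp
qed

lemma shiftq_bdd: "sublin q \<Longrightarrow> bdd_below ((\<lambda>t. q (x + t *\<^sub>R a) - t * q a) ` {0..})"
  by (rule bdd_belowI[where m="- q (- x)"]) (auto intro: shiftq_lb)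

lemma shiftq_le: "sublin q \<Longrightarrow> t \<ge> 0 \<Longrightarrow> shiftq q a x \<le> q (x + t *\<^sub>R a) - t * q a"
  unfolding shiftq_def by (rule cInf_lower) (auto intro: shiftq_bdd)

lemma shiftq_ge: "sublin q \<Longrightarrow> (\<And>t. t \<ge> 0 \<Longrightarrow> m \<le> q (x + t *\<^sub>R a) - t * q a) \<Longrightarrow> m \<le> shiftq q a x"
  unfolding shiftq_def by (rule cInf_greatest) auto

lemma shiftq_below: "sublin q \<Longrightarrow> shiftq q a x \<le> q x"
  using shiftq_le[of q 0 a x] by simp

lemma shiftq_lower: "sublin q \<Longrightarrow> - q (- x) \<le> shiftq q a x"
  by (rule shiftq_ge) (auto intro: shiftq_lb)

lemma shiftq_neg: "sublin q \<Longrightarrow> shiftq q a (- a) \<le> - q a"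
  using shiftq_le[of q 1 a "-a"] sublin_0[of q] by simp

lemma shiftq_sublin:
  assumes q: "sublin q"
  shows "sublin (shiftq q a)"
  unfolding sublin_def
proof (intro conjI allI impI)
  fix x y
  have "shiftq q a (x + y) - (q (y + t *\<^sub>R a) - t * q a) \<le> shiftq q a x" if t: "t \<ge> 0" for t
  proof (rule shiftq_ge[OF q])
    fix s :: real assume s: "s \<ge> 0"
    have "shiftq q a (x + y) \<le> q ((x + y) + (s + t) *\<^sub>R a) - (s + t) * q a"
      using shiftq_le[OF q, of "s+t"] s t by simp
    also have "q ((x + y) + (s + t) *\<^sub>R a) \<le> q (x + s *\<^sub>R a) + q (y + t *\<^sub>R a)"
      using sublin_add[OF q, of "x + s *\<^sub>R a" "y + t *\<^sub>R a"]
      by (simp add: algebra_simps scaleR_add_left)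
    finally show "shiftq q a (x + y) - (q (y + t *\<^sub>R a) - t * q a) \<le> q (x + s *\<^sub>R a) - s * q a"
      by (simp add: algebra_simps)
  qed
  hence "shiftq q a (x + y) - shiftq q a x \<le> shiftq q a y"
    by (intro shiftq_ge[OF q]) (auto simp: algebra_simps)
  thus "shiftq q a (x + y) \<le> shiftq q a x + shiftq q a y" by simp
next
  fix c :: real and x assume c: "c \<ge> 0"
  show "shiftq q a (c *\<^sub>R x) = c * shiftq q a x"
  proof (cases "c = 0")
    case True
    have "shiftq q a 0 = 0"
    proof (rule antisym)
      show "shiftq q a 0 \<le> 0" using shiftq_below[OF q, of a 0] sublin_0[OF q] by simp
      show "0 \<le> shiftq q a 0" using shiftq_lower[OF q, of 0 a] sublin_0[OF q] by simp
    qed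
    thus ?thesis using True by simp
  next
    case False
    hence cp: "c > 0" using c by simp
    show ?thesis
    proof (rule antisym)
      show "c * shiftq q a x \<le> shiftq q a (c *\<^sub>R x)"
      proof (rule shiftq_ge[OF q])
        fix t :: real assume t: "t \<ge> 0"
        have "shiftq q a x \<le> q (x + (t/c) *\<^sub>R a) - (t/c) * q a"
          using shiftq_le[OF q, of "t/c" a x] t cp by simp
        hence "c * shiftq q a x \<le> c * (q (x + (t/c) *\<^sub>R a) - (t/c) * q a)"
          using cp by simp
        also have "\<dots> = c * q (x + (t/c) *\<^sub>R a) - t * q a" using cp by (simp add: algebra_simps)
        also have "c * q (x + (t/c) *\<^sub>R a) = q (c *\<^sub>R x + t *\<^sub>R a)"
          using sublin_scale[OF q c, of "x + (t/c) *\<^sub>R a"] cp by (simp add: scaleR_add_right)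
        finally show "c * shiftq q a x \<le> q (c *\<^sub>R x + t *\<^sub>R a) - t * q a" .
      qed
      have "shiftq q a (c *\<^sub>R x) / c \<le> shiftq q a x"
      proof -
        have "shiftq q a (c *\<^sub>R x) \<le> c * shiftq q a x"
        proof -
          have "shiftq q a (c *\<^sub>R x) / c \<le> shiftq q a x"
          proof -
            have "shiftq q a (c *\<^sub>R x) \<le> c * (q (x + t *\<^sub>R a) - t * q a)" if t: "t \<ge> 0" for t
            proof -
              have "shiftq q a (c *\<^sub>R x) \<le> q (c *\<^sub>R x + (c * t) *\<^sub>R a) - (c * t) * q a"
                using shiftq_le[OF q] t cp by simp
              also have "q (c *\<^sub>R x + (c * t) *\<^sub>R a) = c * q (x + t *\<^sub>R a)"
                using sublin_scale[OF q c, of "x + t *\<^sub>R a"] by (simp add: scaleR_add_right)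
              finally show ?thesis by (simp add: algebra_simps)
            qed
            hence "shiftq q a (c *\<^sub>R x) / c \<le> q (x + t *\<^sub>R a) - t * q a" if "t \<ge> 0" for t
            proof -
              have "shiftq q a (c *\<^sub>R x) \<le> c * (q (x + t *\<^sub>R a) - t * q a)" by (rule \<open>\<And>t. 0 \<le> t \<Longrightarrow> _\<close>[OF that])
              thus ?thesis using cp by (simp add: pos_divide_le_eq mult.commute)
            qed
            thus ?thesis by (intro shiftq_ge[OF q]) auto
          qed
          thus ?thesis using cp by (simp add: field_simps)
        qed
        thus ?thesis using cp by (simp add: field_simps)
      qed
      thus "shiftq q a (c *\<^sub>R x) \<le> c * shiftq q a x" using cp by (simp add: field_simps)
    qed
  qed
qed

lemma sublin_minimal_exists:
  assumes p: "sublin (p :: 'a::real_vector \<Rightarrow> real)"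
  shows "\<exists>m \<in> {q. sublin q \<and> q \<le> p}. \<forall>q \<in> {q. sublin q \<and> q \<le> p}. q \<le> m \<longrightarrow> q = m"
proof (rule predicate_Zorn)
  show "partial_order_on {q. sublin q \<and> q \<le> p} (relation_of (\<lambda>q1 q2. q2 \<le> q1) {q. sublin q \<and> q \<le> p})"
    unfolding partial_order_on_def preorder_on_def refl_on_def trans_def antisym_def relation_of_def
    by auto
next
  fix C assume C: "C \<in> Chains (relation_of (\<lambda>q1 q2. q2 \<le> q1) {q. sublin q \<and> q \<le> p})"
  let ?A = "{q. sublin q \<and> q \<le> p}"
  have CA: "C \<subseteq> ?A" and tot: "\<And>a b. a \<in> C \<Longrightarrow> b \<in> C \<Longrightarrow> b \<le> a \<or> a \<le> b"
    using C unfolding Chains_def relation_of_def by auto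
  show "\<exists>u\<in>?A. \<forall>a\<in>C. u \<le> a"
  proof (cases "C = {}")
    case True thus ?thesis using p by auto
  next
    case False
    define u where "u x = Inf ((\<lambda>q. q x) ` C)" for x
    have bdd: "bdd_below ((\<lambda>q. q x) ` C)" for x
    proof (rule bdd_belowI[where m="- p (-x)"])
      fix y assume "y \<in> (\<lambda>q. q x) ` C"
      then obtain q where q: "q \<in> C" "y = q x" by auto
      hence "sublin q" "q (-x) \<le> p (-x)" using CA by (auto simp: le_fun_def)
      thus "- p (-x) \<le> y" using sublin_neg[of q x] q by simp
    qed
    have ule: "u x \<le> q x" if "q \<in> C" for q x
      unfolding u_def by (rule cInf_lower) (use that bdd in auto)
    have uge: "m \<le> u x" if "\<And>q. q \<in> C \<Longrightarrow> m \<le> q x" for m x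
      unfolding u_def by (rule cInf_greatest) (use that False in auto)
    have "sublin u"
      unfolding sublin_def
    proof (intro conjI allI impI)
      fix x y
      have "u (x + y) - q2 y \<le> u x" if q2: "q2 \<in> C" for q2
      proof (rule uge)
        fix q1 assume q1: "q1 \<in> C"
        show "u (x + y) - q2 y \<le> q1 x"
        proof (cases "q1 \<le> q2")
          case True
          have "u (x + y) \<le> q1 (x + y)" by (rule ule[OF q1])
          also have "\<dots> \<le> q1 x + q1 y" using CA q1 by (auto intro: sublin_add)
          also have "q1 y \<le> q2 y" using True by (simp add: le_fun_def)
          finally show ?thesis by simp
        next
          case False
          hence "q2 \<le> q1" using tot[OF q1 q2] by auto
          have "u (x + y) \<le> q2 (x + y)" by (rule ule[OF q2])
          also have "\<dots> \<le> q2 x + q2 y" using CA q2 by (auto intro: sublin_add)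
          also have "q2 x \<le> q1 x" using \<open>q2 \<le> q1\<close> by (simp add: le_fun_def)
          finally show ?thesis by simp
        qed
      qed
      hence "u (x + y) - u x \<le> u y" by (intro uge) (auto simp: algebra_simps)
      thus "u (x + y) \<le> u x + u y" by simp
    next
      fix c :: real and x assume c: "c \<ge> 0"
      have sc: "q (c *\<^sub>R x) = c * q x" if "q \<in> C" for q
        using CA that c by (auto intro: sublin_scale)
      show "u (c *\<^sub>R x) = c * u x"
      proof (cases "c = 0")
        case True
        obtain q0 where q0: "q0 \<in> C" using False by auto
        have "u 0 = 0"
        proof (rule antisym)
          show "u 0 \<le> 0" using ule[OF q0, of 0] sublin_0[of q0] CA q0 by auto
          show "0 \<le> u 0" by (rule uge) (use CA sublin_0 in force)
        qed
        thus ?thesis using True by simp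
      next
        case False
        hence cp: "c > 0" using c by simp
        show ?thesis
        proof (rule antisym)
          have "u (c *\<^sub>R x) / c \<le> u x"
          proof (rule uge)
            fix q assume q: "q \<in> C"
            have "u (c *\<^sub>R x) \<le> c * q x" using ule[OF q, of "c *\<^sub>R x"] sc[OF q] by simp
            thus "u (c *\<^sub>R x) / c \<le> q x" using cp by (simp add: pos_divide_le_eq mult.commute)
          qed
          thus "u (c *\<^sub>R x) \<le> c * u x" using cp by (simp add: pos_divide_le_eq mult.commute)
          show "c * u x \<le> u (c *\<^sub>R x)"
          proof (rule uge)
            fix q assume q: "q \<in> C"
            show "c * u x \<le> q (c *\<^sub>R x)" using ule[OF q, of x] sc[OF q] cp by simp
          qed
        qed
      qed
    qed
    moreover obtain q0 where q0: "q0 \<in> C" using False by auto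
    have "q0 \<le> p" using CA q0 by auto
    hence "u \<le> p" using ule[OF q0] unfolding le_fun_def using order_trans by blast
    moreover have "\<forall>a\<in>C. u \<le> a" using ule by (auto simp: le_fun_def)
    ultimately show ?thesis by auto
  qed
qed

lemma minimal_sublin_linear:
  assumes m: "sublin m" and min: "\<And>q. sublin q \<Longrightarrow> q \<le> m \<Longrightarrow> q = m"
  shows "m (- x) = - m x"
proof -
  have "shiftq m x = m" using min[OF shiftq_sublin[OF m]] shiftq_below[OF m] by (auto simp: le_fun_def)
  hence "m (-x) \<le> - m x" using shiftq_neg[OF m, of x] by metis
  thus ?thesis using sublin_neg[OF m, of x] by simp
qed

lemma sublin_linear_below:
  assumes p: "sublin (p :: 'a::real_vector \<Rightarrow> real)"
  shows "\<exists>F. linear F \<and> (\<forall>x. F x \<le> p x)"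
proof -
  obtain m where m: "sublin m" "m \<le> p" and mmin: "\<And>q. sublin q \<Longrightarrow> q \<le> p \<Longrightarrow> q \<le> m \<Longrightarrow> q = m"
    using sublin_minimal_exists[OF p] by blast
  have odd: "m (- x) = - m x" for x
    by (rule minimal_sublin_linear[OF m(1)]) (use mmin m(2) order_trans in blast)
  have add: "m (x + y) = m x + m y" for x y
  proof (rule antisym)
    show "m (x + y) \<le> m x + m y" by (rule sublin_add[OF m(1)])
    have "m (- x + - y) \<le> m (-x) + m (-y)" by (rule sublin_add[OF m(1)])
    thus "m x + m y \<le> m (x + y)" using odd[of "x+y"] odd[of x] odd[of y] by (simp add: add.commute)
  qed
  have sc: "m (c *\<^sub>R x) = c * m x" for c x
  proof (cases "c \<ge> 0")
    case True thus ?thesis by (rule sublin_scale[OF m(1)])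
  next
    case False
    have "m (c *\<^sub>R x) = m ((-c) *\<^sub>R (-x))" by simp
    also have "\<dots> = (-c) * m (-x)" using False by (intro sublin_scale[OF m(1)]) auto
    finally show ?thesis using odd[of x] by simp
  qed
  have "linear m" by (rule linearI) (use add sc in auto)
  thus ?thesis using m(2) by (auto simp: le_fun_def)
qed

theorem hahn_banach_sublin:
  assumes p: "sublin (p :: 'a::real_vector \<Rightarrow> real)"
  shows "\<exists>F. linear F \<and> (\<forall>x. F x \<le> p x) \<and> F a = p a"
proof -
  obtain F where F: "linear F" "\<forall>x. F x \<le> shiftq p a x"
    using sublin_linear_below[OF shiftq_sublin[OF p]] by blast
  have le: "F x \<le> p x" for x using F(2) shiftq_below[OF p] order_trans by blast
  have "F (-a) \<le> - p a" using F(2) shiftq_neg[OF p] order_trans by blast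
  hence "p a \<le> F a" using linear_neg[OF F(1), of a] by simp
  thus ?thesis using le F(1) antisym by blast
qed

lemma linear_to_blinfun:
  fixes F :: "'a::real_normed_vector \<Rightarrow> real"
  assumes F: "linear F" and b: "\<And>x. F x \<le> norm x"
  shows "\<exists>g :: 'a \<Rightarrow>\<^sub>L real. norm g \<le> 1 \<and> blinfun_apply g = F"
proof -
  have ab: "\<bar>F x\<bar> \<le> norm x" for x
    using b[of x] b[of "-x"] linear_neg[OF F, of x] by auto
  have bl: "bounded_linear F"
    by (rule bounded_linear_intro[where K=1]) (use linear_add[OF F] linear_scale[OF F] ab in auto)
  have "norm (Blinfun F) \<le> 1"
    by (rule norm_blinfun_bound) (use ab bounded_linear_Blinfun_apply[OF bl] in auto)
  thus ?thesis using bounded_linear_Blinfun_apply[OF bl] by blast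
qed

lemma sublin_norm: "sublin (norm :: 'a::real_normed_vector \<Rightarrow> real)"
  unfolding sublin_def by (auto intro: norm_triangle_ineq)

lemma norming_functional:
  fixes x :: "'a::real_normed_vector"
  shows "\<exists>g :: 'a \<Rightarrow>\<^sub>L real. norm g \<le> 1 \<and> blinfun_apply g x = norm x"
proof -
  obtain F where F: "linear F" "\<forall>y. F y \<le> norm y" "F x = norm x"
    using hahn_banach_sublin[OF sublin_norm] by blast
  then obtain g :: "'a \<Rightarrow>\<^sub>L real" where "norm g \<le> 1" "blinfun_apply g = F"
    using linear_to_blinfun[of F] by blast
  thus ?thesis using F by auto
qed

lemma norming_functional1:
  fixes x :: "'a::real_normed_vector"
  assumes "norm x = 1"
  shows "\<exists>g :: 'a \<Rightarrow>\<^sub>L real. norm g = 1 \<and> blinfun_apply g x = 1"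
proof -
  obtain g :: "'a \<Rightarrow>\<^sub>L real" where g: "norm g \<le> 1" "blinfun_apply g x = 1"
    using norming_functional[of x] assms by auto
  have "1 \<le> norm g" using norm_blinfun[of g x] g assms by simp
  thus ?thesis using g by auto
qed

lemma separation_functional:
  fixes p :: "'a::real_normed_vector"
  assumes A: "convex A" and a0: "a0 \<in> A" and d: "\<And>a. a \<in> A \<Longrightarrow> d \<le> dist p a"
  shows "\<exists>g :: 'a \<Rightarrow>\<^sub>L real. norm g \<le> 1 \<and> (\<forall>a\<in>A. blinfun_apply g a \<le> blinfun_apply g p)
            \<and> d \<le> blinfun_apply g (p - a0)"
proof -
  define K where "K = {l *\<^sub>R (a - p) | l a. l \<ge> 0 \<and> a \<in> A}"
  have K0: "0 \<in> K" unfolding K_def using a0 by (auto intro!: exI[of _ 0] exI[of _ a0])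
  have Kne: "K \<noteq> {}" using K0 by auto
  have Kadd: "k1 + k2 \<in> K" if kk: "k1 \<in> K" "k2 \<in> K" for k1 k2
  proof -
    obtain l1 a1 l2 a2 where h: "k1 = l1 *\<^sub>R (a1 - p)" "l1 \<ge> 0" "a1 \<in> A"
      "k2 = l2 *\<^sub>R (a2 - p)" "l2 \<ge> 0" "a2 \<in> A" using kk unfolding K_def by blast
    show ?thesis
    proof (cases "l1 + l2 = 0")
      case True hence "l1 = 0" "l2 = 0" using h by auto
      thus ?thesis using h K0 by simp
    next
      case False
      hence lp: "l1 + l2 > 0" using h by auto
      define a where "a = (l1/(l1+l2)) *\<^sub>R a1 + (l2/(l1+l2)) *\<^sub>R a2"
      have "a \<in> A" unfolding a_def using A h lp
        by (intro convexD) (auto simp: add_divide_distrib[symmetric])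
      moreover have "k1 + k2 = (l1 + l2) *\<^sub>R (a - p)"
      proof -
        have "(l1 + l2) *\<^sub>R a = l1 *\<^sub>R a1 + l2 *\<^sub>R a2"
          using lp unfolding a_def by (simp add: scaleR_add_right)
        thus ?thesis unfolding h by (simp add: scaleR_diff_right scaleR_add_left algebra_simps)
      qed
      ultimately show ?thesis unfolding K_def using lp by (auto intro!: exI[of _ "l1+l2"])
    qed
  qed
  have Kscale: "c *\<^sub>R k \<in> K" if kc: "k \<in> K" "c \<ge> 0" for k c
  proof -
    obtain l a where h: "k = l *\<^sub>R (a - p)" "l \<ge> 0" "a \<in> A" using kc(1) unfolding K_def by blast
    hence "c *\<^sub>R k = (c * l) *\<^sub>R (a - p) \<and> c * l \<ge> 0 \<and> a \<in> A" using kc(2) by auto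
    thus ?thesis unfolding K_def by blast
  qed
  define q where "q v = infdist v K" for v
  have qlow: "m \<le> q v" if "\<And>k. k \<in> K \<Longrightarrow> m \<le> dist v k" for m v
    unfolding q_def infdist_notempty[OF Kne] by (rule cINF_greatest) (use Kne that in auto)
  have qup: "q v \<le> dist v k" if "k \<in> K" for v k
    unfolding q_def using infdist_le[OF that] .
  have "sublin q"
    unfolding sublin_def
  proof (intro conjI allI impI)
    fix v w
    have "q (v + w) - dist w k2 \<le> q v" if k2: "k2 \<in> K" for k2
    proof (rule qlow)
      fix k1 assume k1: "k1 \<in> K"
      have "q (v + w) \<le> dist (v + w) (k1 + k2)" by (rule qup[OF Kadd[OF k1 k2]])
      also have "\<dots> \<le> dist v k1 + dist w k2"
        unfolding dist_norm by (metis add_diff_add norm_triangle_ineq)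
      finally show "q (v + w) - dist w k2 \<le> dist v k1" by simp
    qed
    hence "q (v + w) - q v \<le> q w" by (intro qlow) (auto simp: algebra_simps)
    thus "q (v + w) \<le> q v + q w" by simp
  next
    fix c :: real and v assume c: "c \<ge> 0"
    show "q (c *\<^sub>R v) = c * q v"
    proof (cases "c = 0")
      case True thus ?thesis using qup[OF K0, of 0] q_def infdist_nonneg[of 0 K] by simp
    next
      case False
      hence cp: "c > 0" using c by simp
      show ?thesis
      proof (rule antisym)
        have "q (c *\<^sub>R v) / c \<le> q v"
        proof (rule qlow)
          fix k assume k: "k \<in> K"
          have "q (c *\<^sub>R v) \<le> dist (c *\<^sub>R v) (c *\<^sub>R k)" by (rule qup[OF Kscale[OF k c]])
          also have "\<dots> = c * dist v k" using cp
            by (simp add: dist_norm scaleR_diff_right[symmetric])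
          finally show "q (c *\<^sub>R v) / c \<le> dist v k" using cp by (simp add: pos_divide_le_eq mult.commute)
        qed
        thus "q (c *\<^sub>R v) \<le> c * q v" using cp by (simp add: pos_divide_le_eq mult.commute)
        have "q v \<le> q (c *\<^sub>R v) / c"
        proof -
          have "c * q v \<le> q (c *\<^sub>R v)"
          proof (rule qlow)
            fix k assume k: "k \<in> K"
            have "q v \<le> dist v ((1/c) *\<^sub>R k)" using cp by (intro qup Kscale[OF k]) auto
            also have "\<dots> = dist (c *\<^sub>R v) k / c" using cp
            proof -
              have "c *\<^sub>R v - k = c *\<^sub>R (v - (1/c) *\<^sub>R k)" using cp by (simp add: algebra_simps)
              thus ?thesis using cp by (simp add: dist_norm)
            qed
            finally show "c * q v \<le> dist (c *\<^sub>R v) k" using cp by (simp add: pos_le_divide_eq mult.commute)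
          qed
          thus ?thesis using cp by (simp add: pos_le_divide_eq mult.commute)
        qed
        thus "c * q v \<le> q (c *\<^sub>R v)" using cp by (simp add: pos_le_divide_eq mult.commute)
      qed
    qed
  qed
  then obtain F where F: "linear F" "\<forall>x. F x \<le> q x" "F (p - a0) = q (p - a0)"
    using hahn_banach_sublin by blast
  have qn: "q v \<le> norm v" for v using qup[OF K0, of v] by simp
  obtain g :: "'a \<Rightarrow>\<^sub>L real" where g: "norm g \<le> 1" "blinfun_apply g = F"
    using linear_to_blinfun[OF F(1)] F(2) qn order_trans by blast
  have "F a \<le> F p" if a: "a \<in> A" for a
  proof -
    have "a - p \<in> K" unfolding K_def using a by (auto intro!: exI[of _ 1])
    hence "F (a - p) \<le> 0" using F(2) qup[of "a - p" "a - p"] by (metis dist_self order_trans)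
    thus ?thesis using linear_diff[OF F(1)] by simp
  qed
  moreover have "d \<le> q (p - a0)"
  proof (rule qlow)
    fix k assume "k \<in> K"
    then obtain l a where h: "k = l *\<^sub>R (a - p)" "l \<ge> 0" "a \<in> A" unfolding K_def by auto
    define b where "b = (1/(1+l)) *\<^sub>R a0 + (l/(1+l)) *\<^sub>R a"
    have "b \<in> A" unfolding b_def using A h a0
      by (intro convexD) (auto simp: add_divide_distrib[symmetric])
    hence db: "d \<le> dist p b" by (rule d)
    have "(1 + l) *\<^sub>R b = a0 + l *\<^sub>R a"
      using h(2) unfolding b_def by (simp add: scaleR_add_right)
    hence "p - a0 - k = (1 + l) *\<^sub>R (p - b)"
      unfolding h(1) by (simp add: scaleR_diff_right scaleR_add_left algebra_simps)
    hence "dist (p - a0) k = (1 + l) * dist p b" using h(2) by (simp add: dist_norm)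
    moreover have "0 \<le> dist p b" by simp
    moreover have "dist p b \<le> (1 + l) * dist p b" using h(2) by (simp add: algebra_simps)
    ultimately show "d \<le> dist (p - a0) k" using db by linarith
  qed
  ultimately show ?thesis using g F(3) by auto
qed




lemmas bsimps = plus_blinfun.rep_eq minus_blinfun.rep_eq uminus_blinfun.rep_eq scaleR_blinfun.rep_eq

lemma apply_le_norm:
  fixes g :: "'a::real_normed_vector \<Rightarrow>\<^sub>L real"
  assumes "norm g \<le> 1" shows "blinfun_apply g v \<le> norm v"
proof -
  have "\<bar>blinfun_apply g v\<bar> \<le> norm g * norm v" using norm_blinfun[of g v] by simp
  also have "\<dots> \<le> 1 * norm v" using assms by (intro mult_right_mono) auto
  finally show ?thesis by simp
qed

lemma s_star_ge:
  assumes "\<And>h. blinfun_apply h x = 0 \<Longrightarrow> t / 4 \<le> norm h \<Longrightarrow> \<delta> \<le> norm (g + h) - 1"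
  shows "ereal \<delta> \<le> s_star g x t"
  unfolding s_star_def by (rule Inf_greatest) (use assms in auto)

lemma s_star_le:
  assumes "blinfun_apply h x = 0" "t / 4 \<le> norm h"
  shows "s_star g x t \<le> ereal (norm (g + h) - 1)"
  unfolding s_star_def by (rule Inf_lower) (use assms in auto)

lemma d0_star_ge:
  assumes "norm x = 1" "norm g = 1" "norm (f - g) < t"
  shows "s_star g x t \<le> d0_star f t"
  unfolding d0_star_def by (rule Sup_upper) (use assms in auto)

lemma slice_mem: "norm k \<le> 1 \<Longrightarrow> blinfun_apply k x > \<alpha> \<Longrightarrow> k \<in> dual_slice x \<alpha>"
  unfolding dual_slice_def by auto

lemma ball_mem_iff: "k \<in> ball f e \<longleftrightarrow> norm (f - k) < e"
  by (simp add: dist_norm)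

lemma a_fwd:
  fixes f :: "'a::real_normed_vector \<Rightarrow>\<^sub>L real"
  assumes t: "0 < t" and a: "0 < \<alpha>" "\<alpha> < 1" and x: "norm x = 1"
    and sl: "dual_slice x \<alpha> \<subseteq> ball f (t/16)"
  shows "ereal (min (t/16) ((1/\<alpha> - 1)/2)) \<le> d0_star f t"
proof -
  define \<delta> where "\<delta> = min (t/16) ((1/\<alpha> - 1)/2)"
  obtain g :: "'a \<Rightarrow>\<^sub>L real" where g: "norm g = 1" "blinfun_apply g x = 1" using norming_functional1[OF x] by blast
  have "g \<in> dual_slice x \<alpha>" using g a by (intro slice_mem) auto
  hence fg: "norm (f - g) < t/16" using sl ball_mem_iff by blast
  have ia: "1 + \<delta> < 1 / \<alpha>"
  proof -
    have "\<delta> \<le> (1/\<alpha> - 1)/2" unfolding \<delta>_def by (rule min.cobounded2)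
    moreover have "1/\<alpha> - 1 > 0" using a by (simp add: field_simps)
    moreover have "\<And>b d::real. d \<le> (b - 1)/2 \<Longrightarrow> 0 < b - 1 \<Longrightarrow> 1 + d < b" by (simp add: field_simps)
    ultimately show ?thesis by blast
  qed
  have "ereal \<delta> \<le> s_star g x t"
  proof (rule s_star_ge)
    fix h :: "'a \<Rightarrow>\<^sub>L real" assume hx: "blinfun_apply h x = 0" and hn: "t / 4 \<le> norm h"
    show "\<delta> \<le> norm (g + h) - 1"
    proof (rule ccontr)
      assume "\<not> ?thesis"
      hence nl: "norm (g + h) < 1 + \<delta>" by simp
      define n where "n = norm (g + h)"
      have "1 \<le> n"
      proof -
        have "blinfun_apply (g + h) x = 1" using g hx by (simp add: bsimps)
        thus ?thesis using norm_blinfun[of "g + h" x] x unfolding n_def by simp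
      qed
      define k where "k = (1/n) *\<^sub>R (g + h)"
      have kn: "norm k = 1" using \<open>1 \<le> n\<close> unfolding k_def n_def by (auto simp del: scaleR_add_right)
      have kx: "blinfun_apply k x = 1 / n" using g hx unfolding k_def by (simp add: bsimps)
      have "1 / n > \<alpha>"
      proof -
        have "n < 1 / \<alpha>" using nl ia unfolding n_def by simp
        thus ?thesis using a \<open>1 \<le> n\<close> by (simp add: field_simps)
      qed
      hence "k \<in> dual_slice x \<alpha>" using kn kx by (intro slice_mem) auto
      hence fk: "norm (f - k) < t/16" using sl ball_mem_iff by blast
      have "norm ((g + h) - k) = n - 1"
      proof -
        have "(g + h) - k = (1 - 1/n) *\<^sub>R (g + h)" unfolding k_def by (simp add: algebra_simps)
        moreover have "0 \<le> 1 - 1/n" using \<open>1 \<le> n\<close> by (simp add: field_simps)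
        ultimately have "norm ((g + h) - k) = (1 - 1/n) * n" unfolding n_def by simp
        also have "(1 - 1/n) * n = n - 1" using \<open>1 \<le> n\<close> by (simp add: field_simps)
        finally show ?thesis .
      qed
      have "norm h = norm (((g + h) - k) + (k - f) + (f - g))" by simp
      hence "norm h \<le> norm ((g + h) - k) + norm (k - f) + norm (f - g)"
        using norm_triangle_ineq[of "((g + h) - k) + (k - f)" "f - g"] norm_triangle_ineq[of "(g + h) - k" "k - f"]
        by linarith
      also have "norm (k - f) = norm (f - k)" by (rule norm_minus_commute)
      finally have "norm h < \<delta> + t/16 + t/16" using \<open>norm ((g + h) - k) = n - 1\<close> nl fk fg
        unfolding n_def by linarith
      moreover have "\<delta> \<le> t/16" unfolding \<delta>_def by simp
      ultimately show False using hn t by linarith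
    qed
  qed
  also have "s_star g x t \<le> d0_star f t" using x g fg t by (intro d0_star_ge) auto
  finally show ?thesis unfolding \<delta>_def .
qed

lemma a_bwd:
  fixes f g :: "'a::real_normed_vector \<Rightarrow>\<^sub>L real"
  assumes t: "0 < t" and t2: "t < 2" and x: "norm x = 1" and g: "norm g = 1" and fg: "norm (f - g) < t"
    and d: "\<delta> > 0" and s: "ereal \<delta> \<le> s_star g x t"
  shows "\<exists>x'. norm x' = 1 \<and> dual_slice x' (max (1/(1+\<delta>)) (1/(1+t/4))) \<subseteq> ball f (3*t/2)"
proof -
  have P: "\<delta> \<le> norm (g + h) - 1" if "blinfun_apply h x = 0" "t/4 \<le> norm h" for h
    using order_trans[OF s s_star_le[OF that]] by simp
  have gx0: "blinfun_apply g x \<noteq> 0"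
  proof
    assume "blinfun_apply g x = 0"
    hence "\<delta> \<le> norm (g + - g) - 1" using g t t2 by (intro P) (auto simp: bsimps)
    thus False using d by simp
  qed
  define x' where "x' = sgn (blinfun_apply g x) *\<^sub>R x"
  have x'n: "norm x' = 1" unfolding x'_def using x gx0 by (simp add: abs_sgn)
  have gx': "blinfun_apply g x' = \<bar>blinfun_apply g x\<bar>"
    unfolding x'_def by (simp add: blinfun.scaleR_right sgn_mult_abs abs_sgn)
  have gx'p: "blinfun_apply g x' > 0" using gx' gx0 by simp
  have gx'1: "blinfun_apply g x' \<le> 1" using norm_blinfun[of g x'] g x'n by simp
  have P': "\<delta> \<le> norm (g + h) - 1" if "blinfun_apply h x' = 0" "t/4 \<le> norm h" for h
  proof (rule P[OF _ that(2)])
    have "sgn (blinfun_apply g x) * blinfun_apply h x = 0"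
      using that(1) unfolding x'_def by (simp add: blinfun.scaleR_right)
    thus "blinfun_apply h x = 0" using gx0 by (simp add: sgn_zero_iff)
  qed
  define \<alpha> where "\<alpha> = max (1/(1+\<delta>)) (1/(1+t/4))"
  have a1: "1/(1+\<delta>) \<le> \<alpha>" and a2: "1/(1+t/4) \<le> \<alpha>" unfolding \<alpha>_def by auto
  have "dual_slice x' \<alpha> \<subseteq> ball f (3*t/2)"
  proof
    fix k assume "k \<in> dual_slice x' \<alpha>"
    hence kn: "norm k \<le> 1" and kx: "blinfun_apply k x' > \<alpha>" unfolding dual_slice_def by auto
    have "1/(1+\<delta>) > 0" using d by simp
    hence a0: "\<alpha> > 0" using a1 by linarith
    have kxp: "blinfun_apply k x' > 0" using kx a0 by simp
    define c where "c = blinfun_apply g x' / blinfun_apply k x'"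
    have cp: "c > 0" unfolding c_def using gx'p kxp by simp
    have cle: "c \<le> 1 / blinfun_apply k x'" unfolding c_def using gx'1 kxp by (simp add: divide_right_mono)
    have inv1: "1 / blinfun_apply k x' < 1 + \<delta>"
    proof -
      have "1/(1+\<delta>) < blinfun_apply k x'" using a1 kx by simp
      thus ?thesis using d kxp by (simp add: field_simps)
    qed
    have inv2: "1 / blinfun_apply k x' < 1 + t/4"
    proof -
      have "1/(1+t/4) < blinfun_apply k x'" using a2 kx by simp
      thus ?thesis using t kxp by (simp add: field_simps)
    qed
    define h where "h = c *\<^sub>R k - g"
    have hx: "blinfun_apply h x' = 0" unfolding h_def c_def using kxp by (simp add: bsimps)
    have ckn: "norm (c *\<^sub>R k) \<le> c" using cp kn by (simp add: mult_left_le)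
    have hs: "norm h < t/4"
    proof (rule ccontr)
      assume "\<not> ?thesis"
      hence "\<delta> \<le> norm (g + h) - 1" by (intro P'[OF hx]) auto
      also have "g + h = c *\<^sub>R k" unfolding h_def by simp
      finally show False using ckn cle inv1 by linarith
    qed
    have c_lo: "1 - t/4 < c"
    proof -
      have "norm g \<le> norm (c *\<^sub>R k) + norm h"
        using norm_triangle_ineq4[of "c *\<^sub>R k" g] unfolding h_def
        by (metis add.commute diff_add_cancel norm_minus_commute norm_triangle_ineq)
      thus ?thesis using g hs ckn by linarith
    qed
    have c_hi: "c < 1 + t/4" using cle inv2 by linarith
    have "norm (k - g) \<le> norm (k - c *\<^sub>R k) + norm h"
      unfolding h_def by (metis diff_add_cancel norm_triangle_ineq add_diff_eq diff_diff_eq2)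
    also have "norm (k - c *\<^sub>R k) = \<bar>1 - c\<bar> * norm k"
    proof -
      have "k - c *\<^sub>R k = (1 - c) *\<^sub>R k" by (simp add: algebra_simps)
      thus ?thesis by simp
    qed
    also have "\<bar>1 - c\<bar> * norm k \<le> \<bar>1 - c\<bar>" using kn by (simp add: mult_left_le)
    finally have "norm (k - g) < t/4 + t/4" using c_lo c_hi hs by linarith
    moreover have "norm (f - k) \<le> norm (f - g) + norm (k - g)"
      by (metis norm_minus_commute norm_triangle_ineq4 diff_add_cancel norm_triangle_ineq add_diff_eq diff_diff_eq2)
    ultimately have "norm (f - k) < 3 * t / 2" using fg by linarith
    thus "k \<in> ball f (3*t/2)" by (simp add: dist_norm)
  qed
  thus ?thesis using x'n unfolding \<alpha>_def by blast
qed

lemma slice_from_d0: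
  fixes f :: "'a::real_normed_vector \<Rightarrow>\<^sub>L real"
  assumes t: "0 < t" "t < 2" and c: "c > 0" and d: "ereal c < d0_star f t"
  shows "\<exists>x'. norm x' = 1 \<and> dual_slice x' (max (1/(1+c)) (1/(1+t/4))) \<subseteq> ball f (3*t/2)"
proof -
  obtain y where "y \<in> {s_star g x t | g x. norm x = 1 \<and> norm g = 1 \<and> norm (f - g) < t}" "ereal c < y"
    using d unfolding d0_star_def by (auto simp: less_Sup_iff)
  then obtain g x where gx: "norm x = 1" "norm g = 1" "norm (f - g) < t" "ereal c < s_star g x t" by auto
  show ?thesis by (rule a_bwd[OF t gx(1-3) c]) (use gx(4) in auto)
qed

lemma alpha_bounds: "c > 0 \<Longrightarrow> t > 0 \<Longrightarrow> 0 < max (1/(1+c)) (1/(1+t/4)) \<and> max (1/(1+c)) (1/(1+t/4)) < (1::real)"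
  by (auto simp: field_simps max_def)

lemma part_a:
  fixes f :: "'a::real_normed_vector \<Rightarrow>\<^sub>L real"
  assumes f: "norm f = 1"
  shows "wstar_semidenting f \<longleftrightarrow> (\<forall>t. 0 < t \<and> t < 2 \<longrightarrow> d0_star f t > 0)"
proof
  assume sd: "wstar_semidenting f"
  show "\<forall>t. 0 < t \<and> t < 2 \<longrightarrow> d0_star f t > 0"
  proof (intro allI impI)
    fix t :: real assume t: "0 < t \<and> t < 2"
    obtain \<alpha> x where ax: "0 < \<alpha>" "\<alpha> < 1" "norm x = 1" "dual_slice x \<alpha> \<subseteq> ball f (t/16)"
      using sd t unfolding wstar_semidenting_def by (meson divide_pos_pos zero_less_numeral)
    have "ereal (min (t/16) ((1/\<alpha> - 1)/2)) \<le> d0_star f t"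
      using a_fwd[OF _ ax] t by auto
    moreover have "0 < min (t/16) ((1/\<alpha> - 1)/2)" using t ax by (auto simp: field_simps)
    ultimately show "d0_star f t > 0" by (metis ereal_less(2) order_less_le_trans)
  qed
next
  assume H: "\<forall>t. 0 < t \<and> t < 2 \<longrightarrow> d0_star f t > 0"
  show "wstar_semidenting f"
    unfolding wstar_semidenting_def
  proof (intro conjI allI impI)
    show "norm f = 1" by (rule f)
    fix e :: real assume e: "e > 0"
    define t where "t = min (e/2) 1"
    have t: "0 < t" "t < 2" "3*t/2 < e" using e unfolding t_def by auto
    have "0 < d0_star f t" using H t by auto
    then obtain c where c: "0 < ereal c" "ereal c < d0_star f t" using ereal_dense2 by blast
    have cp: "c > 0" using c by simp
    obtain x where x: "norm x = 1" "dual_slice x (max (1/(1+c)) (1/(1+t/4))) \<subseteq> ball f (3*t/2)"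
      using slice_from_d0[OF t(1,2) cp c(2)] by blast
    have "ball f (3*t/2) \<subseteq> ball f e" using t by auto
    thus "\<exists>\<alpha> x. 0 < \<alpha> \<and> \<alpha> < 1 \<and> norm x = 1 \<and> dual_slice x \<alpha> \<subseteq> ball f e"
      using x alpha_bounds[OF cp t(1)] by blast
  qed
qed




lemma norm_approx:
  fixes f :: "'a::real_normed_vector \<Rightarrow>\<^sub>L real"
  assumes "0 \<le> b" "b < norm f"
  shows "\<exists>v. norm v = 1 \<and> blinfun_apply f v > b"
proof (rule ccontr)
  assume "\<not> ?thesis"
  hence H: "norm v = 1 \<Longrightarrow> blinfun_apply f v \<le> b" for v by force
  have "norm (blinfun_apply f x) \<le> b * norm x" for x
  proof (cases "x = 0")
    case True thus ?thesis by simp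
  next
    case False
    define v where "v = (1/norm x) *\<^sub>R x"
    have vn: "norm v = 1" "norm (-v) = 1" using False unfolding v_def by auto
    have xv: "x = norm x *\<^sub>R v" using False unfolding v_def by simp
    have "blinfun_apply f x = norm x * blinfun_apply f v"
      by (subst xv) (simp add: blinfun.scaleR_right)
    moreover have "\<bar>blinfun_apply f v\<bar> \<le> b" using H[OF vn(1)] H[OF vn(2)] by (auto simp: blinfun.minus_right)
    ultimately show ?thesis by (simp add: abs_mult) (metis mult.commute mult_left_mono norm_ge_zero)
  qed
  hence "norm f \<le> b" using assms(1) by (intro norm_blinfun_bound) auto
  thus False using assms by simp
qed

lemma mip_slice:
  fixes f :: "'a::real_normed_vector \<Rightarrow>\<^sub>L real"
  assumes f: "norm f = 1" and eta: "0 < \<eta>" "\<eta> \<le> 1/24"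
    and u: "blinfun_apply f u = 1" "norm u \<le> 2"
    and v: "norm v = 1" "blinfun_apply f v > 1/2"
    and ball: "{y. norm y \<le> 1 \<and> blinfun_apply f y \<le> 0} \<subseteq> cball z R"
    and R: "R < norm (\<eta> *\<^sub>R u - z)"
  shows "dual_slice ((1 / norm (\<eta> *\<^sub>R u - z)) *\<^sub>R (\<eta> *\<^sub>R u - z)) (max (R / norm (\<eta> *\<^sub>R u - z)) (1 - \<eta>))
           \<subseteq> ball f (14 * \<eta>)"
proof
  define p where "p = \<eta> *\<^sub>R u"
  define N where "N = norm (p - z)"
  define C where "C = {y. norm y \<le> 1 \<and> blinfun_apply f y \<le> 0}"
  have "0 \<in> C" unfolding C_def by simp
  hence R0: "0 \<le> R" using ball unfolding C_def by (metis mem_cball zero_le_dist order_trans subsetD)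
  have NR: "R < N" using R unfolding N_def p_def .
  hence Np: "N > 0" using R0 by simp
  fix g assume "g \<in> dual_slice ((1 / norm (\<eta> *\<^sub>R u - z)) *\<^sub>R (\<eta> *\<^sub>R u - z)) (max (R / norm (\<eta> *\<^sub>R u - z)) (1 - \<eta>))"
  hence gn: "norm g \<le> 1" and gx: "blinfun_apply g ((1/N) *\<^sub>R (p - z)) > max (R / N) (1 - \<eta>)"
    unfolding dual_slice_def N_def p_def by auto
  have gx': "blinfun_apply g ((1/N) *\<^sub>R (p - z)) = blinfun_apply g (p - z) / N"
    by (simp add: blinfun.scaleR_right)
  have gpz: "blinfun_apply g (p - z) > R" using gx Np unfolding gx' by (simp add: field_simps)
  have gbig: "norm g > 1 - \<eta>"
  proof -
    have "norm ((1/N) *\<^sub>R (p - z)) = 1" using Np unfolding N_def by simp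
    hence "blinfun_apply g ((1/N) *\<^sub>R (p - z)) \<le> norm g" using norm_blinfun[of g "(1/N) *\<^sub>R (p - z)"]
      by (metis abs_le_D1 mult.right_neutral real_norm_def)
    thus ?thesis using gx by simp
  qed
  have gp: "blinfun_apply g p \<le> 2 * \<eta>"
  proof -
    have "blinfun_apply g p \<le> norm g * norm p" using norm_blinfun[of g p] by simp
    also have "\<dots> \<le> 1 * (\<eta> * 2)" unfolding p_def using gn u eta
      by (intro mult_mono) (auto intro: mult_left_mono)
    finally show ?thesis by simp
  qed
  have gC: "blinfun_apply g y < 2 * \<eta>" if y: "y \<in> C" for y
  proof -
    have "norm (y - z) \<le> R" using ball y unfolding C_def by (auto simp: dist_norm norm_minus_commute)
    hence "blinfun_apply g (y - z) \<le> R" using apply_le_norm[OF gn, of "y - z"] by linarith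
    hence "blinfun_apply g y < blinfun_apply g p" using gpz by (simp add: blinfun.diff_right)
    thus ?thesis using gp by simp
  qed
  have ker: "\<bar>blinfun_apply g w\<bar> \<le> 2 * \<eta> * norm w" if w: "blinfun_apply f w = 0" for w
  proof (cases "w = 0")
    case True thus ?thesis by simp
  next
    case False
    define y where "y = (1/norm w) *\<^sub>R w"
    have "y \<in> C" "-y \<in> C" unfolding C_def y_def using w False by (auto simp: blinfun.scaleR_right blinfun.minus_right)
    hence "\<bar>blinfun_apply g y\<bar> < 2 * \<eta>" using gC[of y] gC[of "-y"] by (auto simp: blinfun.minus_right)
    moreover have "blinfun_apply g w = norm w * blinfun_apply g y" unfolding y_def using False
      by (simp add: blinfun.scaleR_right)
    ultimately show ?thesis by (simp add: abs_mult mult.commute mult_left_mono less_imp_le)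
  qed
  define l where "l = blinfun_apply g u"
  have glf: "norm (g - l *\<^sub>R f) \<le> 6 * \<eta>"
  proof (rule norm_blinfun_bound)
    show "0 \<le> 6 * \<eta>" using eta by simp
    fix y
    have "blinfun_apply f (y - blinfun_apply f y *\<^sub>R u) = 0" using u by (simp add: blinfun.diff_right blinfun.scaleR_right)
    hence "\<bar>blinfun_apply g (y - blinfun_apply f y *\<^sub>R u)\<bar> \<le> 2 * \<eta> * norm (y - blinfun_apply f y *\<^sub>R u)"
      by (rule ker)
    moreover have "blinfun_apply g (y - blinfun_apply f y *\<^sub>R u) = blinfun_apply (g - l *\<^sub>R f) y"
      unfolding l_def by (simp add: blinfun.diff_right blinfun.scaleR_right bsimps)
    moreover have "norm (y - blinfun_apply f y *\<^sub>R u) \<le> 3 * norm y"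
    proof -
      have "norm (y - blinfun_apply f y *\<^sub>R u) \<le> norm y + \<bar>blinfun_apply f y\<bar> * norm u"
        using norm_triangle_ineq4[of y "blinfun_apply f y *\<^sub>R u"] by simp
      also have "\<bar>blinfun_apply f y\<bar> \<le> norm y" using norm_blinfun[of f y] f by simp
      hence "\<bar>blinfun_apply f y\<bar> * norm u \<le> norm y * 2" using u by (intro mult_mono) auto
      finally show ?thesis by simp
    qed
    moreover have "2 * \<eta> * norm (y - blinfun_apply f y *\<^sub>R u) \<le> 2 * \<eta> * (3 * norm y)"
      using eta \<open>norm (y - blinfun_apply f y *\<^sub>R u) \<le> 3 * norm y\<close> by (intro mult_left_mono) auto
    ultimately show "norm (blinfun_apply (g - l *\<^sub>R f) y) \<le> 6 * \<eta> * norm y"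
      unfolding real_norm_def by linarith
  qed
  have lnorm: "norm (l *\<^sub>R f) = \<bar>l\<bar>" using f by simp
  have labs: "1 - 7 * \<eta> \<le> \<bar>l\<bar>" "\<bar>l\<bar> \<le> 1 + 6 * \<eta>"
  proof -
    have "norm g \<le> norm (l *\<^sub>R f) + norm (g - l *\<^sub>R f)" by (metis norm_triangle_sub add.commute)
    thus "1 - 7 * \<eta> \<le> \<bar>l\<bar>" using glf gbig lnorm by linarith
    have "norm (l *\<^sub>R f) \<le> norm g + norm (g - l *\<^sub>R f)" by (metis norm_triangle_sub norm_minus_commute add.commute diff_add_cancel norm_triangle_ineq4)
    thus "\<bar>l\<bar> \<le> 1 + 6 * \<eta>" using glf gn lnorm by linarith
  qed
  have lpos: "l > 0"
  proof (rule ccontr)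
    assume "\<not> l > 0"
    have y0: "-v \<in> C" unfolding C_def using v by (auto simp: blinfun.minus_right)
    have "\<bar>blinfun_apply (g - l *\<^sub>R f) (-v)\<bar> \<le> 6 * \<eta>"
      using norm_blinfun[of "g - l *\<^sub>R f" "-v"] glf v by simp
    hence "blinfun_apply g (-v) \<ge> l * blinfun_apply f (-v) - 6 * \<eta>"
      by (simp add: bsimps blinfun.minus_right)
    moreover have "l * blinfun_apply f (-v) = \<bar>l\<bar> * blinfun_apply f v"
      using \<open>\<not> l > 0\<close> by (simp add: blinfun.minus_right)
    moreover have "\<bar>l\<bar> * blinfun_apply f v \<ge> (1 - 7 * \<eta>) * (1/2)"
      using labs v eta by (intro mult_mono) auto
    ultimately have "blinfun_apply g (-v) \<ge> (1 - 7 * \<eta>) / 2 - 6 * \<eta>" by (simp add: field_simps)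
    thus False using gC[OF y0] eta by (simp add: field_simps)
  qed
  have "norm (f - g) \<le> norm (f - l *\<^sub>R f) + norm (g - l *\<^sub>R f)"
    by (metis norm_minus_commute norm_triangle_ineq4 diff_diff_eq2 norm_diff_triangle_le order_refl)
  also have "norm (f - l *\<^sub>R f) = \<bar>1 - l\<bar>"
  proof -
    have "f - l *\<^sub>R f = (1 - l) *\<^sub>R f" by (simp add: algebra_simps)
    thus ?thesis using f by simp
  qed
  finally have "norm (f - g) \<le> 13 * \<eta>" using labs lpos glf by auto
  thus "g \<in> ball f (14 * \<eta>)" using eta by (simp add: dist_norm)
qed




lemma le_infdist:
  assumes "A \<noteq> {}" "\<And>a. a \<in> A \<Longrightarrow> m \<le> dist x a"
  shows "m \<le> infdist x A"
  unfolding infdist_notempty[OF assms(1)] by (rule cINF_greatest) (use assms in auto)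

lemma infdist_near:
  assumes "A \<noteq> {}" "e > 0"
  shows "\<exists>a\<in>A. dist x a < infdist x A + e"
proof -
  have "infdist x A < infdist x A + e" using assms by simp
  thus ?thesis unfolding infdist_notempty[OF assms(1)]
    by (subst (asm) cINF_less_iff) (use assms in \<open>auto intro: bdd_belowI[where m=0]\<close>)
qed

lemma slice_mono: "\<alpha> \<le> \<beta> \<Longrightarrow> dual_slice x \<beta> \<subseteq> dual_slice x \<alpha>"
  unfolding dual_slice_def by auto

lemma margin_from_sep:
  fixes F :: "'a::real_normed_vector \<Rightarrow>\<^sub>L real"
  assumes s: "s \<ge> 0" and H: "\<And>y. norm y \<le> s \<Longrightarrow> blinfun_apply F (c + y) \<le> blinfun_apply F q"
  shows "s * norm F \<le> blinfun_apply F q - blinfun_apply F c"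
proof (cases "s = 0")
  case True
  thus ?thesis using H[of 0] by simp
next
  case False
  hence sp: "s > 0" using s by simp
  show ?thesis
  proof (rule ccontr)
    assume "\<not> ?thesis"
    hence lt: "(blinfun_apply F q - blinfun_apply F c) / s < norm F" using sp by (simp add: field_simps)
    have "0 \<le> blinfun_apply F q - blinfun_apply F c" using H[of 0] s by simp
    hence "0 \<le> (blinfun_apply F q - blinfun_apply F c) / s" using sp by simp
    then obtain v where v: "norm v = 1" "blinfun_apply F v > (blinfun_apply F q - blinfun_apply F c) / s"
      using norm_approx[OF _ lt] by blast
    have "blinfun_apply F (c + s *\<^sub>R v) \<le> blinfun_apply F q" using H[of "s *\<^sub>R v"] v s by simp
    hence "s * blinfun_apply F v \<le> blinfun_apply F q - blinfun_apply F c"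
      by (simp add: blinfun.add_right blinfun.scaleR_right)
    thus False using v sp by (simp add: field_simps)
  qed
qed

lemma core_ball:
  fixes C :: "'a::real_normed_vector set" and p cs :: 'a
  assumes C: "convex C" and cs: "cs \<in> C"
    and D: "D \<ge> 0" "\<And>w w'. w \<in> C \<Longrightarrow> w' \<in> C \<Longrightarrow> dist w w' \<le> D"
    and r: "r > 0" and H1: "\<And>c. c \<in> C \<Longrightarrow> r \<le> dist p c"
    and H2: "\<And>c. c \<in> C \<Longrightarrow> dist p cs \<le> dist p c + r/8"
    and sd: "\<And>f :: 'a \<Rightarrow>\<^sub>L real. norm f = 1 \<Longrightarrow>
              \<exists>\<alpha>\<in>A. \<exists>x. 0 < \<alpha> \<and> \<alpha> < 1 \<and> norm x = 1 \<and> dual_slice x \<alpha> \<subseteq> ball f (r / (4 * (3 * D + 4 * r)))"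
  shows "\<exists>ctr R \<alpha>. \<alpha> \<in> A \<and> 0 < \<alpha> \<and> \<alpha> < 1 \<and> R = (D + 3 * r / 2) / (1 - \<alpha>) \<and>
           C \<subseteq> cball ctr R \<and> (\<forall>b\<in>cball ctr R. r/2 \<le> dist p b)"
proof -
  define \<epsilon> where "\<epsilon> = r / (4 * (3 * D + 4 * r))"
  have \<epsilon>p: "\<epsilon> > 0" unfolding \<epsilon>_def using r D by simp
  have \<epsilon>b: "\<epsilon> * (3 * D + 4 * r) = r / 4"
  proof -
    have "3 * D + 4 * r > 0" using r D by simp
    thus ?thesis unfolding \<epsilon>_def by (simp add: field_simps)
  qed
  define L where "L = dist p cs"
  have Lr: "r \<le> L" unfolding L_def using H1[OF cs] .
  define e where "e = (1/L) *\<^sub>R (p - cs)"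
  define p' where "p' = cs + r *\<^sub>R e"
  have pcs: "p - cs = L *\<^sub>R e" unfolding e_def using Lr r by (simp add: L_def)
  have pne: "p \<noteq> cs" using Lr r unfolding L_def by auto
  have en: "norm e = 1" unfolding e_def using pne by (simp add: L_def dist_norm)
  have pp': "norm (p - p') = L - r"
  proof -
    have "p - p' = (L - r) *\<^sub>R e" unfolding p'_def using pcs
      by (metis (no_types, lifting) add_diff_cancel_left' diff_add_cancel diff_diff_eq scaleR_left_diff_distrib)
    thus ?thesis using en Lr by simp
  qed
  have p'cs: "norm (p' - cs) = r" unfolding p'_def using en r by simp
  have farp': "7 * r / 8 \<le> dist p' c" if c: "c \<in> C" for c
  proof -
    have "dist p c \<le> dist p p' + dist p' c" by (rule dist_triangle)
    moreover have "dist p p' = L - r" using pp' by (simp add: dist_norm)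
    moreover have "L \<le> dist p c + r/8" using H2[OF c] unfolding L_def .
    ultimately show ?thesis by linarith
  qed
  define A' where "A' = {c + y | c y. c \<in> C \<and> y \<in> cball 0 (3 * r / 4)}"
  have A'conv: "convex A'"
  proof -
    have "A' = (\<Union>x\<in>C. \<Union>y \<in> cball 0 (3 * r / 4). {x + y})" unfolding A'_def by blast
    thus ?thesis using convex_sums[OF C convex_cball] by simp
  qed
  have cs': "cs \<in> A'" unfolding A'_def using cs r by force
  have A'far: "r/8 \<le> dist p' a" if aA: "a \<in> A'" for a
  proof -
    obtain c y where cy: "a = c + y" "c \<in> C" "norm y \<le> 3 * r / 4" using aA unfolding A'_def by auto
    have "dist p' c \<le> dist p' a + dist a c" by (rule dist_triangle)
    moreover have "dist a c = norm y" using cy by (simp add: dist_norm)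
    ultimately show ?thesis using farp'[OF cy(2)] cy(3) by linarith
  qed
  obtain F :: "'a \<Rightarrow>\<^sub>L real" where F: "norm F \<le> 1" "\<forall>a\<in>A'. blinfun_apply F a \<le> blinfun_apply F p'"
      "r/8 \<le> blinfun_apply F (p' - cs)"
    using separation_functional[OF A'conv cs' A'far] by blast
  have Fpos: "norm F > 0"
  proof -
    have "blinfun_apply F (p' - cs) \<le> norm F * norm (p' - cs)" using norm_blinfun[of F "p' - cs"] by simp
    hence "blinfun_apply F (p' - cs) \<le> norm F * r" using p'cs by simp
    hence "0 < norm F * r" using F(3) r by linarith
    thus ?thesis using r by (simp add: zero_less_mult_iff)
  qed
  define f where "f = (1 / norm F) *\<^sub>R F"
  have fn: "norm f = 1" unfolding f_def using Fpos by simp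
  have fsep: "3 * r / 4 \<le> blinfun_apply f p' - blinfun_apply f c" if c: "c \<in> C" for c
  proof -
    have "3 * r / 4 * norm F \<le> blinfun_apply F p' - blinfun_apply F c"
      by (rule margin_from_sep) (use r F(2) c in \<open>auto simp: A'_def\<close>)
    hence "3 * r / 4 \<le> (blinfun_apply F p' - blinfun_apply F c) / norm F" using Fpos by (simp add: field_simps)
    thus ?thesis unfolding f_def by (simp add: bsimps diff_divide_distrib)
  qed
  obtain \<alpha> x where ax: "\<alpha> \<in> A" "0 < \<alpha>" "\<alpha> < 1" "norm x = 1" "dual_slice x \<alpha> \<subseteq> ball f \<epsilon>"
    using sd[OF fn] unfolding \<epsilon>_def by blast
  obtain g0 :: "'a \<Rightarrow>\<^sub>L real" where g0: "norm g0 = 1" "blinfun_apply g0 x = 1" using norming_functional1[OF ax(4)] by blast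
  have "g0 \<in> dual_slice x \<alpha>" using g0 ax by (intro slice_mem) auto
  hence fg0: "norm (f - g0) < \<epsilon>" using ax(5) ball_mem_iff by blast
  have near: "norm (k - g0) < 2 * \<epsilon>" if "k \<in> dual_slice x \<alpha>" for k
  proof -
    have "norm (f - k) < \<epsilon>" using that ax(5) ball_mem_iff by blast
    moreover have "norm (k - g0) \<le> norm (f - k) + norm (f - g0)"
      by (metis norm_minus_commute norm_triangle_ineq4 diff_add_cancel norm_triangle_ineq add_diff_eq diff_diff_eq2)
    ultimately show ?thesis using fg0 by linarith
  qed
  define M where "M = D + 3 * r / 2"
  define R where "R = M / (1 - \<alpha>)"
  define z where "z = p' - (r/2) *\<^sub>R x"
  define ctr where "ctr = z - R *\<^sub>R x"
  have Mp: "M > 0" unfolding M_def using D r by simp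
  have RM: "R * (1 - \<alpha>) = M" unfolding R_def using ax by simp
  have R0: "R \<ge> 0" unfolding R_def using Mp ax by simp
  have g0z: "blinfun_apply g0 z = blinfun_apply g0 p' - r/2"
    unfolding z_def using g0 by (simp add: blinfun.diff_right blinfun.scaleR_right)
  have wz: "norm (w - z) \<le> M" and wp': "norm (w - p') \<le> D + r" if w: "w \<in> C" for w
  proof -
    have "norm (w - p') \<le> norm (w - cs) + norm (cs - p')" using norm_triangle_ineq[of "w - cs" "cs - p'"] by simp
    moreover have "norm (w - cs) \<le> D" using D(2)[OF w cs] by (simp add: dist_norm)
    moreover have "norm (cs - p') = r" using p'cs by (simp add: norm_minus_commute)
    ultimately show "norm (w - p') \<le> D + r" by simp
    moreover have "norm (w - z) \<le> norm (w - p') + norm (p' - z)" using norm_triangle_ineq[of "w - p'" "p' - z"] by simp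
    moreover have "norm (p' - z) = r/2" unfolding z_def using ax(4) r by simp
    ultimately show "norm (w - z) \<le> M" unfolding M_def by simp
  qed
  have g0wz: "blinfun_apply g0 (w - z) \<le> - 2 * \<epsilon> * norm (w - z)" if w: "w \<in> C" for w
  proof -
    have "blinfun_apply (g0 - f) (w - p') \<le> norm (g0 - f) * norm (w - p')"
      using norm_blinfun[of "g0 - f" "w - p'"] by simp
    also have "\<dots> \<le> \<epsilon> * (D + r)" using fg0 wp'[OF w] \<epsilon>p
      by (intro mult_mono) (auto simp: norm_minus_commute)
    finally have "blinfun_apply g0 (w - p') \<le> blinfun_apply f (w - p') + \<epsilon> * (D + r)"
      by (simp add: bsimps)
    moreover have "blinfun_apply f (w - p') \<le> - 3 * r / 4" using fsep[OF w] by (simp add: blinfun.diff_right)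
    moreover have "blinfun_apply g0 (w - z) = blinfun_apply g0 (w - p') + r/2"
      using g0z by (simp add: blinfun.diff_right)
    moreover have "2 * \<epsilon> * norm (w - z) \<le> 2 * \<epsilon> * M" using wz[OF w] \<epsilon>p by simp
    moreover have "\<epsilon> * (D + r) + 2 * \<epsilon> * M = r / 4" using \<epsilon>b unfolding M_def by (simp add: algebra_simps)
    ultimately show ?thesis by linarith
  qed
  have Cin: "C \<subseteq> cball ctr R"
  proof
    fix w assume w: "w \<in> C"
    obtain k :: "'a \<Rightarrow>\<^sub>L real" where k: "norm k \<le> 1" "blinfun_apply k (w - ctr) = norm (w - ctr)"
      using norming_functional by blast
    have wo: "w - ctr = (w - z) + R *\<^sub>R x" unfolding ctr_def by simp
    have kx1: "blinfun_apply k x \<le> 1" using norm_blinfun[of k x] k(1) ax(4)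
      by (metis abs_le_D1 mult.right_neutral order_trans real_norm_def)
    have kwz: "blinfun_apply k (w - z) \<le> norm (w - z)" using norm_blinfun[of k "w - z"] k(1)
      by (metis abs_le_D1 mult_left_le_one_le norm_ge_zero order_trans real_norm_def mult.commute)
    have "norm (w - ctr) \<le> R"
    proof (cases "blinfun_apply k x > \<alpha>")
      case True
      hence "k \<in> dual_slice x \<alpha>" using k(1) by (intro slice_mem)
      hence kg: "norm (k - g0) < 2 * \<epsilon>" by (rule near)
      have "blinfun_apply (k - g0) (w - z) \<le> norm (k - g0) * norm (w - z)"
        using norm_blinfun[of "k - g0" "w - z"] by simp
      also have "\<dots> \<le> 2 * \<epsilon> * norm (w - z)" using kg by (intro mult_right_mono) auto
      finally have "blinfun_apply k (w - z) \<le> 0" using g0wz[OF w] by (simp add: bsimps)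
      hence "norm (w - ctr) \<le> R * blinfun_apply k x" using k(2) unfolding wo
        by (simp add: blinfun.add_right blinfun.scaleR_right)
      moreover have "R * blinfun_apply k x \<le> R" using kx1 R0 by (rule mult_left_le)
      ultimately show ?thesis by linarith
    next
      case False
      have "norm (w - ctr) = blinfun_apply k (w - z) + R * blinfun_apply k x" using k(2) unfolding wo
        by (simp add: blinfun.add_right blinfun.scaleR_right)
      also have "\<dots> \<le> M + R * \<alpha>"
      proof -
        have "R * blinfun_apply k x \<le> R * \<alpha>" using False R0 by (intro mult_left_mono) auto
        thus ?thesis using kwz wz[OF w] by linarith
      qed
      also have "\<dots> = R" using RM by (simp add: algebra_simps)
      finally show ?thesis .
    qed
    thus "w \<in> cball ctr R" by (simp add: dist_norm norm_minus_commute)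
  qed
  have bfar: "blinfun_apply g0 (p' - b) \<ge> r/2" if b: "b \<in> cball ctr R" for b
  proof -
    have "norm (b - ctr) \<le> R" using b by (simp add: dist_norm norm_minus_commute)
    hence "blinfun_apply g0 (b - ctr) \<le> R" using norm_blinfun[of g0 "b - ctr"] g0(1)
      by (metis abs_le_D1 mult_1 order_trans real_norm_def)
    moreover have "blinfun_apply g0 ctr = blinfun_apply g0 z - R" unfolding ctr_def using g0
      by (simp add: blinfun.diff_right blinfun.scaleR_right)
    ultimately have "blinfun_apply g0 b \<le> blinfun_apply g0 z" by (simp add: blinfun.diff_right)
    thus ?thesis using g0z by (simp add: blinfun.diff_right)
  qed
  have "r/2 \<le> dist p b" if b: "b \<in> cball ctr R" for b
  proof -
    have c1: "blinfun_apply g0 (p' - cs) \<ge> 0" using bfar[of cs] Cin cs r by auto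
    have "p - p' = (L/r - 1) *\<^sub>R (p' - cs)"
    proof -
      have "p' - cs = r *\<^sub>R e" unfolding p'_def by simp
      hence "(L/r - 1) *\<^sub>R (p' - cs) = (L - r) *\<^sub>R e" using r by (simp add: algebra_simps)
      moreover have "p - p' = (L - r) *\<^sub>R e" unfolding p'_def using pcs
        by (metis (no_types, lifting) add_diff_cancel_left' diff_add_cancel diff_diff_eq scaleR_left_diff_distrib)
      ultimately show ?thesis by simp
    qed
    hence "blinfun_apply g0 (p - p') = (L/r - 1) * blinfun_apply g0 (p' - cs)" by (simp add: blinfun.scaleR_right)
    moreover have "L/r - 1 \<ge> 0" using Lr r by (simp add: field_simps)
    ultimately have "blinfun_apply g0 (p - p') \<ge> 0" using c1 by simp
    hence "blinfun_apply g0 (p - b) \<ge> r/2" using bfar[OF b] by (simp add: blinfun.diff_right)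
    moreover have "blinfun_apply g0 (p - b) \<le> dist p b" using norm_blinfun[of g0 "p - b"] g0(1)
      by (simp add: dist_norm)
    ultimately show ?thesis by linarith
  qed
  thus ?thesis using Cin ax unfolding R_def M_def by blast
qed




definition Cset :: "('a::real_normed_vector \<Rightarrow>\<^sub>L real) \<Rightarrow> 'a set" where
  "Cset f = {y. norm y \<le> 1 \<and> blinfun_apply f y \<le> 0}"

lemma Cf_props:
  fixes f :: "'a::real_normed_vector \<Rightarrow>\<^sub>L real"
  shows "closed (Cset f)" and "bounded (Cset f)" and "convex (Cset f)" and "0 \<in> Cset f"
    and "Cset f \<subseteq> cball 0 1"
  unfolding Cset_def
proof -
  let ?C = "{y. norm y \<le> 1 \<and> blinfun_apply f y \<le> 0}"
  have "?C = cball 0 1 \<inter> {y. blinfun_apply f y \<le> 0}" by auto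
  moreover have "closed {y. blinfun_apply f y \<le> 0}"
    by (rule closed_Collect_le) (auto intro: linear_continuous_on blinfun.bounded_linear_right)
  ultimately show "closed ?C" by auto
  show sub: "?C \<subseteq> cball 0 1" by auto
  thus "bounded ?C" using bounded_cball bounded_subset by blast
  show "0 \<in> ?C" by simp
  show "convex ?C"
  proof (rule convexI)
    fix x y u v assume x: "x \<in> ?C" and y: "y \<in> ?C" and uv0: "0 \<le> (u::real)" "0 \<le> v" "u + v = 1"
    hence uv: "0 \<le> (u::real) \<and> 0 \<le> v \<and> u + v = 1" by simp
    have "norm (u *\<^sub>R x + v *\<^sub>R y) \<le> u * norm x + v * norm y"
      using norm_triangle_ineq[of "u *\<^sub>R x" "v *\<^sub>R y"] uv by simp
    also have "\<dots> \<le> u * 1 + v * 1" using x y uv by (intro add_mono mult_left_mono) auto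
    finally have "norm (u *\<^sub>R x + v *\<^sub>R y) \<le> 1" using uv by simp
    moreover have "blinfun_apply f (u *\<^sub>R x + v *\<^sub>R y) \<le> 0"
      using x y uv by (simp add: blinfun.add_right blinfun.scaleR_right add_nonpos_nonpos mult_nonneg_nonpos)
    ultimately show "u *\<^sub>R x + v *\<^sub>R y \<in> ?C" by simp
  qed
qed

lemma uv_exist:
  fixes f :: "'a::real_normed_vector \<Rightarrow>\<^sub>L real"
  assumes "norm f = 1"
  shows "\<exists>u v. blinfun_apply f u = 1 \<and> norm u \<le> 2 \<and> norm v = 1 \<and> blinfun_apply f v > 1/2"
proof -
  obtain v where v: "norm v = 1" "blinfun_apply f v > 1/2" using norm_approx[of "1/2" f] assms by auto
  define u where "u = (1 / blinfun_apply f v) *\<^sub>R v"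
  have "blinfun_apply f u = 1" unfolding u_def using v by (simp add: blinfun.scaleR_right)
  moreover have "norm u \<le> 2" unfolding u_def using v by (simp add: field_simps)
  ultimately show ?thesis using v by blast
qed

lemma mip_sd:
  fixes f :: "'a::real_normed_vector \<Rightarrow>\<^sub>L real"
  assumes mip: "mazur_intersection_property (X :: 'a itself)" and f: "norm f = 1"
  shows "wstar_semidenting f"
  unfolding wstar_semidenting_def
proof (intro conjI allI impI)
  show "norm f = 1" by (rule f)
  fix \<epsilon> :: real assume \<epsilon>: "\<epsilon> > 0"
  define \<eta> where "\<eta> = min (\<epsilon>/14) (1/24)"
  have \<eta>: "0 < \<eta>" "\<eta> \<le> 1/24" "14 * \<eta> \<le> \<epsilon>" unfolding \<eta>_def using \<epsilon> by auto
  obtain u v where uv: "blinfun_apply f u = 1" "norm u \<le> 2" "norm v = 1" "blinfun_apply f v > 1/2"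
    using uv_exist[OF f] by blast
  define C where "C = Cset f"
  note Cp = Cf_props[of f, folded C_def]
  define p where "p = \<eta> *\<^sub>R u"
  have "p \<notin> C" unfolding C_def Cset_def p_def using uv \<eta> by (simp add: blinfun.scaleR_right)
  moreover have "C = \<Inter> {cball x r | x r. C \<subseteq> cball x r}"
    using mip Cp unfolding mazur_intersection_property_def by blast
  ultimately obtain z R where zR: "C \<subseteq> cball z R" "p \<notin> cball z R" by blast
  have R0: "0 \<le> R" using zR(1) Cp(4) by (metis mem_cball zero_le_dist order_trans subsetD)
  have RN: "R < norm (\<eta> *\<^sub>R u - z)" using zR(2) unfolding p_def by (simp add: dist_norm norm_minus_commute)
  define N where "N = norm (\<eta> *\<^sub>R u - z)"
  have Np: "N > 0" using RN R0 unfolding N_def by linarith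
  have sl: "dual_slice ((1 / N) *\<^sub>R (\<eta> *\<^sub>R u - z)) (max (R / N) (1 - \<eta>)) \<subseteq> ball f (14 * \<eta>)"
    unfolding N_def by (rule mip_slice[OF f \<eta>(1,2) uv zR(1)[unfolded C_def Cset_def] RN])
  have "norm ((1 / N) *\<^sub>R (\<eta> *\<^sub>R u - z)) = 1" using Np unfolding N_def by simp
  moreover have "0 < max (R / N) (1 - \<eta>)" using \<eta> by simp
  moreover have "max (R / N) (1 - \<eta>) < 1" using RN Np \<eta> unfolding N_def by (simp add: field_simps)
  moreover have "ball f (14 * \<eta>) \<subseteq> ball f \<epsilon>" using \<eta> by auto
  ultimately show "\<exists>\<alpha> x. 0 < \<alpha> \<and> \<alpha> < 1 \<and> norm x = 1 \<and> dual_slice x \<alpha> \<subseteq> ball f \<epsilon>"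
    using sl by blast
qed

lemma sd_mip:
  assumes sd: "\<And>f :: 'a::real_normed_vector \<Rightarrow>\<^sub>L real. norm f = 1 \<Longrightarrow> wstar_semidenting f"
  shows "mazur_intersection_property (X :: 'a itself)"
  unfolding mazur_intersection_property_def
proof (intro allI impI)
  fix C :: "'a set" assume C: "closed C \<and> bounded C \<and> convex C \<and> C \<noteq> {}"
  show "C = \<Inter> {cball x r | x r. C \<subseteq> cball x r}"
  proof
    show "C \<subseteq> \<Inter> {cball x r | x r. C \<subseteq> cball x r}" by blast
    show "\<Inter> {cball x r | x r. C \<subseteq> cball x r} \<subseteq> C"
    proof
      fix p assume p: "p \<in> \<Inter> {cball x r | x r. C \<subseteq> cball x r}"
      show "p \<in> C"
      proof (rule ccontr)
        assume pC: "p \<notin> C"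
        define r where "r = infdist p C"
        have r: "r > 0" unfolding r_def using infdist_pos_not_in_closed C pC by blast
        obtain cs where cs: "cs \<in> C" "dist p cs < r + r/8"
          using infdist_near[of C "r/8" p] C r unfolding r_def by auto
        have H1: "r \<le> dist p c" if "c \<in> C" for c unfolding r_def using infdist_le[OF that] .
        have H2: "dist p cs \<le> dist p c + r/8" if "c \<in> C" for c using H1[OF that] cs by linarith
        define D where "D = diameter C"
        have D0: "D \<ge> 0" unfolding D_def using C diameter_ge_0 by blast
        have Dd: "dist w w' \<le> D" if "w \<in> C" "w' \<in> C" for w w'
          unfolding D_def using diameter_bounded_bound C that by blast
        have eps: "r / (4 * (3 * D + 4 * r)) > 0" using r D0 by simp
        have sd': "\<exists>\<alpha>\<in>UNIV. \<exists>x. 0 < \<alpha> \<and> \<alpha> < 1 \<and> norm x = 1 \<and> dual_slice x \<alpha> \<subseteq> ball f (r / (4 * (3 * D + 4 * r)))"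
          if "norm f = 1" for f :: "'a \<Rightarrow>\<^sub>L real"
          using sd[OF that] eps unfolding wstar_semidenting_def by blast
        obtain ctr R where cb: "C \<subseteq> cball ctr R" "\<forall>b\<in>cball ctr R. r/2 \<le> dist p b"
          using core_ball[OF _ cs(1) D0 Dd r H1 H2 sd'] C by blast
        have "p \<in> cball ctr R" using p cb(1) by blast
        thus False using cb(2) r by fastforce
      qed
    qed
  qed
qed

theorem part_b:
  fixes X :: "'a::real_normed_vector itself"
  shows "mazur_intersection_property X \<longleftrightarrow>
            (\<forall>(f :: 'a \<Rightarrow>\<^sub>L real) t. norm f = 1 \<and> 0 < t \<and> t < 2 \<longrightarrow> d0_star f t > 0)"
proof -
  have "(\<forall>(f :: 'a \<Rightarrow>\<^sub>L real) t. norm f = 1 \<and> 0 < t \<and> t < 2 \<longrightarrow> d0_star f t > 0)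
        \<longleftrightarrow> (\<forall>f :: 'a \<Rightarrow>\<^sub>L real. norm f = 1 \<longrightarrow> wstar_semidenting f)"
    using part_a by blast
  also have "\<dots> \<longleftrightarrow> mazur_intersection_property X"
    using mip_sd[of X] sd_mip[of X] by blast
  finally show ?thesis by simp
qed




lemma umip_from_d0:
  fixes X :: "'a::real_normed_vector itself"
  assumes H: "\<forall>t. 0 < t \<and> t < 2 \<longrightarrow> d0_star_mod X t > 0"
  shows "uniform_mazur_intersection_property X"
  unfolding uniform_mazur_intersection_property_def
proof (intro allI impI)
  fix r :: real assume r: "r > 0"
  define D where "D = 1 / r"
  have D0: "D \<ge> 0" unfolding D_def using r by simp
  define ec where "ec = r / (4 * (3 * D + 4 * r))"
  have ec: "ec > 0" unfolding ec_def using r D0 by simp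
  define t where "t = min (ec/2) 1"
  have t: "0 < t" "t < 2" "3 * t / 2 < ec" unfolding t_def using ec by auto
  have "0 < d0_star_mod X t" using H t by auto
  then obtain c where c: "0 < ereal c" "ereal c < d0_star_mod X t" using ereal_dense2 by blast
  have cp: "c > 0" using c by simp
  define \<alpha>0 where "\<alpha>0 = max (1/(1+c)) (1/(1+t/4))"
  have a0: "0 < \<alpha>0" "\<alpha>0 < 1" unfolding \<alpha>0_def using alpha_bounds[OF cp t(1)] by auto
  have sd: "\<exists>\<alpha>\<in>{\<alpha>0}. \<exists>x. 0 < \<alpha> \<and> \<alpha> < 1 \<and> norm x = 1 \<and> dual_slice x \<alpha> \<subseteq> ball f ec"
    if f: "norm f = 1" for f :: "'a \<Rightarrow>\<^sub>L real"
  proof -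
    have "d0_star_mod X t \<le> d0_star f t" unfolding d0_star_mod_def by (rule Inf_lower) (use f in auto)
    hence "ereal c < d0_star f t" using c by simp
    then obtain x where x: "norm x = 1" "dual_slice x \<alpha>0 \<subseteq> ball f (3*t/2)"
      using slice_from_d0[OF t(1,2) cp] unfolding \<alpha>0_def by blast
    have "ball f (3*t/2) \<subseteq> ball f ec" using t by auto
    thus ?thesis using x a0 by blast
  qed
  define K where "K = (D + 3 * r / 2) / (1 - \<alpha>0)"
  have Kp: "K > 0" unfolding K_def using a0 D0 r by simp
  show "\<exists>K>0. \<forall>(C::'a set) p. closed C \<and> bounded C \<and> convex C \<and> C \<noteq> {} \<and> diameter C < 1 / r \<and> r \<le> infdist p C \<longrightarrow>
          (\<exists>x0 r0. C \<subseteq> cball x0 r0 \<and> r / 2 \<le> infdist p (cball x0 r0) \<and> r0 \<le> K)"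
  proof (intro exI[of _ K] conjI allI impI Kp)
    fix C :: "'a set" and p
    assume C: "closed C \<and> bounded C \<and> convex C \<and> C \<noteq> {} \<and> diameter C < 1 / r \<and> r \<le> infdist p C"
    obtain cs where cs: "cs \<in> C" "dist p cs < infdist p C + r/8"
      using infdist_near[of C "r/8" p] C r by auto
    have H1: "r \<le> dist p c" if "c \<in> C" for c using infdist_le[OF that, of p] C by linarith
    have H2: "dist p cs \<le> dist p c + r/8" if "c \<in> C" for c using infdist_le[OF that, of p] cs by linarith
    have Dd: "dist w w' \<le> D" if "w \<in> C" "w' \<in> C" for w w'
    proof -
      have "dist w w' \<le> diameter C" using diameter_bounded_bound[of C w w'] C that by blast
      thus ?thesis using C unfolding D_def by linarith
    qed
    obtain ctr R \<alpha> where cb: "\<alpha> \<in> {\<alpha>0}" "R = (D + 3 * r / 2) / (1 - \<alpha>)" "C \<subseteq> cball ctr R"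
        "\<forall>b\<in>cball ctr R. r/2 \<le> dist p b"
      using core_ball[OF _ cs(1) D0 Dd r H1 H2 sd[unfolded ec_def]] C by blast
    have RK: "R = K" using cb(1,2) unfolding K_def by simp
    have "cball ctr R \<noteq> {}" using cb(3) C by blast
    hence "r/2 \<le> infdist p (cball ctr R)" using cb(4) by (intro le_infdist) auto
    thus "\<exists>x0 r0. C \<subseteq> cball x0 r0 \<and> r / 2 \<le> infdist p (cball x0 r0) \<and> r0 \<le> K"
      using cb(3) RK by blast
  qed
qed

lemma d0_from_umip:
  fixes X :: "'a::real_normed_vector itself"
  assumes U: "uniform_mazur_intersection_property X" and t: "0 < t" "t < 2"
  shows "d0_star_mod X t > 0"
proof -
  define \<eta> where "\<eta> = min (t / (16 * 14)) (1/24)"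
  have \<eta>: "0 < \<eta>" "\<eta> \<le> 1/24" "14 * \<eta> \<le> t/16" unfolding \<eta>_def using t by auto
  define \<eta>' where "\<eta>' = min \<eta> (1/3)"
  have \<eta>': "0 < \<eta>'" "\<eta>' \<le> \<eta>" "\<eta>' \<le> 1/3" unfolding \<eta>'_def using \<eta> by auto
  have "\<forall>\<epsilon>>0. \<exists>K>0. \<forall>(C::'a set) p. closed C \<and> bounded C \<and> convex C \<and> C \<noteq> {} \<and> diameter C < 1 / \<epsilon>
        \<and> \<epsilon> \<le> infdist p C \<longrightarrow> (\<exists>x0 r0. C \<subseteq> cball x0 r0 \<and> \<epsilon> / 2 \<le> infdist p (cball x0 r0) \<and> r0 \<le> K)"
    using U unfolding uniform_mazur_intersection_property_def .
  hence "\<exists>K>0. \<forall>(C::'a set) p. closed C \<and> bounded C \<and> convex C \<and> C \<noteq> {} \<and> diameter C < 1 / \<eta>'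
        \<and> \<eta>' \<le> infdist p C \<longrightarrow> (\<exists>x0 r0. C \<subseteq> cball x0 r0 \<and> \<eta>' / 2 \<le> infdist p (cball x0 r0) \<and> r0 \<le> K)"
    using \<eta>'(1) by (rule mp[OF spec[where x="\<eta>'"]])
  then obtain K where K: "K > 0" and KH0: "\<forall>(C::'a set) p. closed C \<and> bounded C \<and> convex C \<and> C \<noteq> {} \<and> diameter C < 1 / \<eta>'
        \<and> \<eta>' \<le> infdist p C \<longrightarrow> (\<exists>x0 r0. C \<subseteq> cball x0 r0 \<and> \<eta>' / 2 \<le> infdist p (cball x0 r0) \<and> r0 \<le> K)"
    by blast
  note KH = KH0[rule_format]
  define \<alpha>0 where "\<alpha>0 = max (K / (K + \<eta>'/2)) (1 - \<eta>)"
  have k1: "0 < K / (K + \<eta>'/2)" using K \<eta>' by simp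
  have k2: "K / (K + \<eta>'/2) < 1" using K \<eta>' by (simp add: field_simps)
  have a0: "0 < \<alpha>0" "\<alpha>0 < 1" unfolding \<alpha>0_def using k1 k2 \<eta> by auto
  define c0 where "c0 = min (t/16) ((1/\<alpha>0 - 1)/2)"
  have "1 < 1 / \<alpha>0" using a0 by (simp add: field_simps)
  hence c0: "c0 > 0" unfolding c0_def using t by simp
  have "ereal c0 \<le> d0_star f t" if f: "norm f = 1" for f :: "'a \<Rightarrow>\<^sub>L real"
  proof -
    obtain u v where uv: "blinfun_apply f u = 1" "norm u \<le> 2" "norm v = 1" "blinfun_apply f v > 1/2"
      using uv_exist[OF f] by blast
    define C where "C = Cset f"
    note Cp = Cf_props[of f, folded C_def]
    define p where "p = \<eta> *\<^sub>R u"
    have diam: "diameter C < 1 / \<eta>'"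
    proof -
      have "diameter C \<le> 2"
      proof (rule diameter_le)
        fix x y assume "x \<in> C" "y \<in> C"
        hence "norm x \<le> 1" "norm y \<le> 1" using Cp(5) by auto
        thus "norm (x - y) \<le> 2" using norm_triangle_ineq4[of x y] by simp
      qed simp
      moreover have "3 \<le> 1 / \<eta>'" using \<eta>' by (simp add: field_simps)
      ultimately show ?thesis by simp
    qed
    have inf: "\<eta>' \<le> infdist p C"
    proof (rule le_infdist)
      show "C \<noteq> {}" using Cp(4) by auto
      fix c assume c: "c \<in> C"
      have "blinfun_apply f (p - c) \<le> dist p c" using apply_le_norm[of f "p - c"] f by (simp add: dist_norm)
      moreover have "blinfun_apply f (p - c) \<ge> \<eta>" using c uv unfolding C_def Cset_def p_def
        by (simp add: blinfun.diff_right blinfun.scaleR_right)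
      ultimately show "\<eta>' \<le> dist p c" using \<eta>' by linarith
    qed
    have "C \<noteq> {}" using Cp(4) by auto
    hence "\<exists>x0 r0. C \<subseteq> cball x0 r0 \<and> \<eta>' / 2 \<le> infdist p (cball x0 r0) \<and> r0 \<le> K"
      using Cp(1,2,3) diam inf by (intro KH) simp
    then obtain z R where zR: "C \<subseteq> cball z R" "\<eta>'/2 \<le> infdist p (cball z R)" "R \<le> K" by blast
    have R0: "0 \<le> R" using zR(1) Cp(4) by (metis mem_cball zero_le_dist order_trans subsetD)
    define N where "N = norm (p - z)"
    have NR: "R + \<eta>'/2 \<le> N"
    proof (cases "N \<le> R")
      case True
      hence "p \<in> cball z R" unfolding N_def by (simp add: dist_norm norm_minus_commute)
      hence "infdist p (cball z R) = 0" by simp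
      thus ?thesis using zR(2) \<eta>' by simp
    next
      case False
      hence Np: "N > 0" using R0 by simp
      define b where "b = z + (R/N) *\<^sub>R (p - z)"
      have "dist z b = R" unfolding b_def N_def using Np R0 unfolding N_def by (simp add: dist_norm)
      hence "b \<in> cball z R" by simp
      hence "infdist p (cball z R) \<le> dist p b" by (rule infdist_le)
      moreover have "dist p b = N - R"
      proof -
        have "p - b = (1 - R/N) *\<^sub>R (p - z)" unfolding b_def by (simp add: algebra_simps)
        moreover have "1 - R/N \<ge> 0" using False Np by (simp add: field_simps)
        ultimately have "dist p b = (1 - R/N) * N" unfolding N_def by (simp add: dist_norm)
        also have "(1 - R/N) * N = N - R" using Np by (simp add: field_simps)
        finally show ?thesis .
      qed
      ultimately show ?thesis using zR(2) by linarith
    qed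
    have Np: "N > 0" using NR R0 \<eta>' by linarith
    have RN: "R < norm (\<eta> *\<^sub>R u - z)" using NR \<eta>' unfolding N_def p_def by linarith
    have sl: "dual_slice ((1 / N) *\<^sub>R (\<eta> *\<^sub>R u - z)) (max (R / N) (1 - \<eta>)) \<subseteq> ball f (14 * \<eta>)"
      unfolding N_def p_def by (rule mip_slice[OF f \<eta>(1,2) uv zR(1)[unfolded C_def Cset_def] RN])
    have "R / N \<le> K / (K + \<eta>'/2)"
    proof -
      have "R / N \<le> R / (R + \<eta>'/2)" using NR R0 \<eta>' by (intro divide_left_mono) auto
      also have "\<dots> \<le> K / (K + \<eta>'/2)" using R0 zR(3) \<eta>' K by (simp add: field_simps)
      finally show ?thesis .
    qed
    hence "max (R / N) (1 - \<eta>) \<le> \<alpha>0" unfolding \<alpha>0_def by auto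
    hence "dual_slice ((1 / N) *\<^sub>R (\<eta> *\<^sub>R u - z)) \<alpha>0 \<subseteq> ball f (14 * \<eta>)"
      using sl slice_mono by blast
    moreover have "ball f (14 * \<eta>) \<subseteq> ball f (t/16)" using \<eta>(3) by (rule subset_ball)
    ultimately have "dual_slice ((1 / N) *\<^sub>R (\<eta> *\<^sub>R u - z)) \<alpha>0 \<subseteq> ball f (t/16)" by blast
    moreover have "norm ((1 / N) *\<^sub>R (\<eta> *\<^sub>R u - z)) = 1" using Np unfolding N_def p_def by simp
    ultimately show ?thesis using a_fwd[OF t(1) a0] unfolding c0_def by blast
  qed
  hence "ereal c0 \<le> d0_star_mod X t" unfolding d0_star_mod_def by (auto intro: Inf_greatest)
  thus ?thesis using c0 by (metis ereal_less(2) order_less_le_trans)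
qed

theorem part_c:
  fixes X :: "'a::real_normed_vector itself"
  shows "uniform_mazur_intersection_property X \<longleftrightarrow> (\<forall>t. 0 < t \<and> t < 2 \<longrightarrow> d0_star_mod X t > 0)"
  using umip_from_d0 d0_from_umip by blast


theorem mainTheorem7:
  fixes X :: "'a::banach itself"
  shows "(\<forall>f :: 'a \<Rightarrow>\<^sub>L real. norm f = 1 \<longrightarrow>
            (wstar_semidenting f \<longleftrightarrow> (\<forall>t. 0 < t \<and> t < 2 \<longrightarrow> d0_star f t > 0)))
       \<and> (mazur_intersection_property X \<longleftrightarrow>
            (\<forall>(f :: 'a \<Rightarrow>\<^sub>L real) t. norm f = 1 \<and> 0 < t \<and> t < 2 \<longrightarrow> d0_star f t > 0))
       \<and> (uniform_mazur_intersection_property X \<longleftrightarrow>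
            (\<forall>t. 0 < t \<and> t < 2 \<longrightarrow> d0_star_mod X t > 0))"
proof (intro conjI)
  show "\<forall>f :: 'a \<Rightarrow>\<^sub>L real. norm f = 1 \<longrightarrow>
            (wstar_semidenting f \<longleftrightarrow> (\<forall>t. 0 < t \<and> t < 2 \<longrightarrow> d0_star f t > 0))"
    using part_a by blast
  show "mazur_intersection_property X \<longleftrightarrow>
            (\<forall>(f :: 'a \<Rightarrow>\<^sub>L real) t. norm f = 1 \<and> 0 < t \<and> t < 2 \<longrightarrow> d0_star f t > 0)"
    by (rule part_b)
  show "uniform_mazur_intersection_property X \<longleftrightarrow>
            (\<forall>t. 0 < t \<and> t < 2 \<longrightarrow> d0_star_mod X t > 0)"
    by (rule part_c)
qed

end
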